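(* Let $G$ be a profinite group such that the set $FC(G)=\{g\in G : g \text{ has only finitely many conjugates in } G\}$ is dense in $G$. Then: (1) if $g\in FC(G)$, then the closed subgroup $[G,g]$ is finite; (2) if $g\in FC(G)$ is an element of finite order, then the closed subgroup $\langle g^G\rangle$ topologically generated by the conjugacy class of $g$ is finite.
   Context: For subsets $X,Y$ of a profinite group, $[X,Y]$ denotes the closed subgroup topologically generated by all commutators $[x,y]$ with $x\in X$, $y\in Y$; $[G,g]$ means $[G,\{g\}]$. $g^G$ denotes the conjugacy class of $g$ in $G$. *)

theory Defs
  imports "HOL-Analysis.Analysis" "HOL-Algebra.Algebra"
begin

definition topological_group :: "('a, 'b) monoid_scheme \<Rightarrow> 'a topology \<Rightarrow> bool" where
  "topological_group G T \<longleftrightarrow>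
     group G \<and> topspace T = carrier G \<and>
     continuous_map (prod_topology T T) T (\<lambda>(x, y). x \<otimes>\<^bsub>G\<^esub> y) \<and>
     continuous_map T T (\<lambda>x. inv\<^bsub>G\<^esub> x)"

definition profinite_group :: "('a, 'b) monoid_scheme \<Rightarrow> 'a topology \<Rightarrow> bool" where
  "profinite_group G T \<longleftrightarrow>
     topological_group G T \<and> compact_space T \<and> Hausdorff_space T \<and>
     (\<forall>x\<in>topspace T. connected_component_of_set T x = {x})"

definition top_generate :: "('a, 'b) monoid_scheme \<Rightarrow> 'a topology \<Rightarrow> 'a set \<Rightarrow> 'a set" where
  "top_generate G T S = \<Inter>{H. subgroup H G \<and> closedin T H \<and> S \<subseteq> H}"

definition grp_commutator :: "('a, 'b) monoid_scheme \<Rightarrow> 'a \<Rightarrow> 'a \<Rightarrow> 'a" where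
  "grp_commutator G x y = inv\<^bsub>G\<^esub> x \<otimes>\<^bsub>G\<^esub> inv\<^bsub>G\<^esub> y \<otimes>\<^bsub>G\<^esub> x \<otimes>\<^bsub>G\<^esub> y"

definition top_commutator :: "('a, 'b) monoid_scheme \<Rightarrow> 'a topology \<Rightarrow> 'a set \<Rightarrow> 'a set \<Rightarrow> 'a set" where
  "top_commutator G T A B = top_generate G T {grp_commutator G x y | x y. x \<in> A \<and> y \<in> B}"

definition conj_class :: "('a, 'b) monoid_scheme \<Rightarrow> 'a \<Rightarrow> 'a set" where
  "conj_class G g = {h \<otimes>\<^bsub>G\<^esub> g \<otimes>\<^bsub>G\<^esub> inv\<^bsub>G\<^esub> h | h. h \<in> carrier G}"

definition FC :: "('a, 'b) monoid_scheme \<Rightarrow> 'a set" where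
  "FC G = {g \<in> carrier G. finite (conj_class G g)}"

end

theory Submission
  imports Defs
begin

definition plist :: "('a, 'b) monoid_scheme \<Rightarrow> 'a list \<Rightarrow> 'a" where
  "plist G l = foldr (\<lambda>x y. x \<otimes>\<^bsub>G\<^esub> y) l \<one>\<^bsub>G\<^esub>"

context group begin

lemma plist_Nil[simp]: "plist G [] = \<one>" by (simp add: plist_def)
lemma plist_Cons[simp]: "plist G (x # l) = x \<otimes> plist G l" by (simp add: plist_def)

lemma plist_closed[simp]: "set l \<subseteq> carrier G \<Longrightarrow> plist G l \<in> carrier G"
  by (induct l) auto

lemma plist_append: "set l \<subseteq> carrier G \<Longrightarrow> set l' \<subseteq> carrier G \<Longrightarrow>
   plist G (l @ l') = plist G l \<otimes> plist G l'"
  by (induct l) (auto simp: m_assoc)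

lemma plist_replicate: "t \<in> carrier G \<Longrightarrow> plist G (replicate k t) = t [^] k"
  by (induct k) (auto, metis nat_pow_Suc nat_pow_Suc2)

lemma conj_pow: "h \<in> carrier G \<Longrightarrow> s \<in> carrier G \<Longrightarrow>
   (h \<otimes> s \<otimes> inv h) [^] (n::nat) = h \<otimes> s [^] n \<otimes> inv h"
proof (induct n)
  case 0 then show ?case by (metis nat_pow_0 r_one r_inv)
next
  case (Suc n)
  have "(h \<otimes> s \<otimes> inv h) [^] Suc n = (h \<otimes> s [^] n \<otimes> inv h) \<otimes> (h \<otimes> s \<otimes> inv h)"
    using Suc by simp
  also have "\<dots> = h \<otimes> (s [^] n \<otimes> s) \<otimes> inv h"
    using Suc.prems by (simp add: m_assoc[symmetric]) (simp add: m_assoc)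
  finally show ?case by simp
qed


lemma collect:
  assumes W: "W \<subseteq> carrier G" and cc: "\<And>h x. h \<in> carrier G \<Longrightarrow> x \<in> W \<Longrightarrow> h \<otimes> x \<otimes> inv h \<in> W"
    and t: "t \<in> W"
  shows "set l \<subseteq> W \<Longrightarrow> \<exists>l'. set l' \<subseteq> W \<and> length l' + count_list l t = length l
            \<and> plist G l = t [^] count_list l t \<otimes> plist G l'"
proof (induct l)
  case Nil
  then show ?case by (intro exI[of _ "[]"]) simp
next
  case (Cons a l)
  then obtain l' where l': "set l' \<subseteq> W" "length l' + count_list l t = length l"
     "plist G l = t [^] count_list l t \<otimes> plist G l'" by auto
  have tc: "t \<in> carrier G" using t W by auto
  have ac: "a \<in> carrier G" using Cons W by auto
  have lc: "plist G l' \<in> carrier G" using l' W by auto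
  define c where "c = count_list l t"
  show ?case
  proof (cases "a = t")
    case True
    have "t \<otimes> t [^] c = t [^] c \<otimes> t" by (metis nat_pow_Suc nat_pow_Suc2 tc)
    then show ?thesis
      using l' True tc lc by (intro exI[of _ l']) (simp add: c_def[symmetric] m_assoc[symmetric])
  next
    case False
    define a' where "a' = inv (t [^] c) \<otimes> a \<otimes> t [^] c"
    have a'W: "a' \<in> W" using cc[of "inv (t [^] c)" a] Cons tc unfolding a'_def by auto
    have "a \<otimes> plist G l = t [^] c \<otimes> (a' \<otimes> plist G l')"
      using l' tc ac lc unfolding a'_def c_def[symmetric]
      by (simp add: m_assoc[symmetric] r_inv)
    then show ?thesis
      using l' False a'W by (intro exI[of _ "a' # l'"]) (simp add: c_def)
  qed
qed

lemma shorten: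
  assumes W: "W \<subseteq> carrier G" and cc: "\<And>h x. h \<in> carrier G \<Longrightarrow> x \<in> W \<Longrightarrow> h \<otimes> x \<otimes> inv h \<in> W"
    and fin: "finite W" and N: "\<And>t. t \<in> W \<Longrightarrow> t [^] N = \<one>" and Npos: "N > 0"
  shows "set l \<subseteq> W \<Longrightarrow> \<exists>l'. set l' \<subseteq> W \<and> length l' \<le> card W * N \<and> plist G l' = plist G l"
proof (induct "length l" arbitrary: l rule: less_induct)
  case less
  show ?case
  proof (cases "length l \<le> card W * N")
    case True then show ?thesis using less by blast
  next
    case False
    have "\<exists>t\<in>W. N \<le> count_list l t"
    proof (rule ccontr)
      assume "\<not> ?thesis"
      then have "sum (count_list l) W \<le> sum (\<lambda>_. N) W"
        by (intro sum_mono) auto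
      then show False using sum_count_set[OF less.prems fin] False by simp
    qed
    then obtain t where t: "t \<in> W" "N \<le> count_list l t" by blast
    obtain l' where l': "set l' \<subseteq> W" "length l' + count_list l t = length l"
            "plist G l = t [^] count_list l t \<otimes> plist G l'"
      using collect[OF W cc t(1) less.prems] by blast
    have tc: "t \<in> carrier G" using t W by auto
    define k where "k = count_list l t - N"
    have "t [^] count_list l t = t [^] k \<otimes> t [^] N"
      using t tc by (simp add: nat_pow_mult k_def)
    then have pl: "plist G l = plist G (replicate k t @ l')"
      using l' tc W N[OF t(1)] by (subst plist_append) (auto simp: plist_replicate)
    have "length (replicate k t @ l') < length l" using l' t False unfolding k_def
      using Npos by simp
    moreover have rs: "set (replicate k t @ l') \<subseteq> W" using l' t by (auto simp: set_replicate_conv_if)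
    ultimately obtain l'' where "set l'' \<subseteq> W" "length l'' \<le> card W * N"
        "plist G l'' = plist G (replicate k t @ l')"
      using less.hyps by blast
    then show ?thesis using pl by metis
  qed
qed

lemma dietzmann:
  assumes W: "W \<subseteq> carrier G" and cc: "\<And>h x. h \<in> carrier G \<Longrightarrow> x \<in> W \<Longrightarrow> h \<otimes> x \<otimes> inv h \<in> W"
    and fin: "finite W" and tor: "\<And>t. t \<in> W \<Longrightarrow> \<exists>n::nat. n > 0 \<and> t [^] n = \<one>"
  shows "finite (generate G W)"
proof -
  define ord' where "ord' t = (SOME n::nat. n > 0 \<and> t [^] n = \<one>)" for t
  have ord': "ord' t > 0 \<and> t [^] ord' t = \<one>" if "t \<in> W" for t
    using someI_ex[OF tor[OF that]] unfolding ord'_def by blast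
  define N where "N = prod ord' W"
  have Npos: "N > 0" unfolding N_def using ord' fin by (simp add: prod_pos)
  have N: "t [^] N = \<one>" if "t \<in> W" for t
  proof -
    have "ord' t dvd N" unfolding N_def using fin that by (simp add: dvd_prod_eqI)
    then obtain k where "N = ord' t * k" by auto
    then show ?thesis using that ord' W by (auto simp: nat_pow_pow[symmetric])
  qed
  define P where "P = {plist G l | l. set l \<subseteq> W}"
  have gen: "generate G W \<subseteq> P"
  proof
    fix x assume "x \<in> generate G W"
    then show "x \<in> P"
    proof (induct rule: generate.induct)
      case one
      then show ?case unfolding P_def by (intro CollectI exI[of _ "[]"]) simp
    next
      case (incl h)
      then show ?case unfolding P_def using W by (intro CollectI exI[of _ "[h]"]) auto
    next
      case (inv h)
      have hc: "h \<in> carrier G" using inv W by auto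
      have "h [^] (N - 1) \<otimes> h = \<one>" using N[OF inv] Npos
        by (metis Suc_diff_1 nat_pow_Suc)
      then have "inv h = plist G (replicate (N - 1) h)"
        using hc by (simp add: plist_replicate inv_equality)
      then show ?case unfolding P_def using inv by (intro CollectI exI[of _ "replicate (N - 1) h"]) auto
    next
      case (eng h1 h2)
      then obtain l1 l2 where "set l1 \<subseteq> W" "set l2 \<subseteq> W" "h1 = plist G l1" "h2 = plist G l2"
        unfolding P_def by auto
      then show ?case unfolding P_def using W
        by (intro CollectI exI[of _ "l1 @ l2"]) (auto simp: plist_append)
    qed
  qed
  have "P \<subseteq> plist G ` {l. set l \<subseteq> W \<and> length l \<le> card W * N}"
  proof
    fix x assume "x \<in> P"
    then obtain l where "set l \<subseteq> W" "x = plist G l" unfolding P_def by auto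
    moreover obtain l' where "set l' \<subseteq> W \<and> length l' \<le> card W * N \<and> plist G l' = plist G l"
      using shorten[OF W cc fin N Npos \<open>set l \<subseteq> W\<close>] by blast
    ultimately show "x \<in> plist G ` {l. set l \<subseteq> W \<and> length l \<le> card W * N}"
      by (metis (mono_tags, lifting) image_eqI mem_Collect_eq)
  qed
  moreover have "finite {l. set l \<subseteq> W \<and> length l \<le> card W * N}"
    using finite_lists_length_le[OF fin] by simp
  ultimately show ?thesis using gen by (meson finite_imageI finite_subset)
qed

end

context group begin

lemma comm_inv: "x \<in> carrier G \<Longrightarrow> y \<in> carrier G \<Longrightarrow> x \<otimes> y = y \<otimes> x \<Longrightarrow> inv x \<otimes> y = y \<otimes> inv x"
proof -
  assume x: "x \<in> carrier G" and y: "y \<in> carrier G" and e: "x \<otimes> y = y \<otimes> x"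
  have "inv x \<otimes> y = inv x \<otimes> (y \<otimes> x) \<otimes> inv x" using x y by (simp add: m_assoc r_inv)
  also have "\<dots> = inv x \<otimes> (x \<otimes> y) \<otimes> inv x" using e by simp
  also have "\<dots> = y \<otimes> inv x" using x y by (simp add: m_assoc[symmetric] l_inv)
  finally show ?thesis .
qed

lemma cancel_mid: "a \<in> carrier G \<Longrightarrow> b \<in> carrier G \<Longrightarrow> c \<in> carrier G \<Longrightarrow> a \<otimes> inv b \<otimes> (b \<otimes> c) = a \<otimes> c"
proof -
  assume a: "a \<in> carrier G" and b: "b \<in> carrier G" and c: "c \<in> carrier G"
  have 1: "inv b \<otimes> (b \<otimes> c) = c" using inv_solve_left'[of c b "b \<otimes> c"] b c by simp
  have "a \<otimes> inv b \<otimes> (b \<otimes> c) = a \<otimes> (inv b \<otimes> (b \<otimes> c))" using a b c by (intro m_assoc) auto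
  then show ?thesis using 1 by simp
qed

lemma conj_comm_id: "z \<in> carrier G \<Longrightarrow> u \<in> carrier G \<Longrightarrow> z \<otimes> u = u \<otimes> z \<Longrightarrow> inv z \<otimes> u \<otimes> z = u"
proof -
  assume z: "z \<in> carrier G" and u: "u \<in> carrier G" and e: "z \<otimes> u = u \<otimes> z"
  have 1: "inv z \<otimes> (z \<otimes> u) = u" using inv_solve_left'[of u z "z \<otimes> u"] z u by simp
  have "inv z \<otimes> u \<otimes> z = inv z \<otimes> (u \<otimes> z)" using z u by (intro m_assoc) auto
  then show ?thesis using 1 e by simp
qed

lemma conj_class_finite_inv: "finite (conj_class G g) \<Longrightarrow> g \<in> carrier G \<Longrightarrow> finite (conj_class G (inv g))"
proof -
  assume f: "finite (conj_class G g)" and g: "g \<in> carrier G"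
  have "conj_class G (inv g) \<subseteq> (\<lambda>x. inv x) ` conj_class G g"
  proof
    fix x assume "x \<in> conj_class G (inv g)"
    then obtain h where h: "h \<in> carrier G" "x = h \<otimes> inv g \<otimes> inv h" unfolding conj_class_def by auto
    then have "x = inv (h \<otimes> g \<otimes> inv h)" using g by (simp add: inv_mult_group m_assoc)
    then show "x \<in> (\<lambda>x. inv x) ` conj_class G g" using h unfolding conj_class_def by blast
  qed
  then show ?thesis using f finite_surj by blast
qed

lemma comm_torsion:
  assumes a: "a \<in> FC G" and b: "b \<in> FC G"
  shows "\<exists>n::nat. n > 0 \<and> grp_commutator G a b [^] n = \<one>"
proof -
  have ac: "a \<in> carrier G" and bc: "b \<in> carrier G" using a b unfolding FC_def by auto
  define L where "L = generate G {a, b}"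
  have L: "subgroup L G" unfolding L_def using ac bc by (intro generate_is_subgroup) auto
  have aL: "a \<in> L" and bL: "b \<in> L" unfolding L_def by (auto intro: generate.incl)
  have Lc: "L \<subseteq> carrier G" by (rule subgroup.subset[OF L])
  have Lm: "x \<otimes> y \<in> L" if "x \<in> L" "y \<in> L" for x y using subgroup.m_closed[OF L that] .
  have Li: "inv x \<in> L" if "x \<in> L" for x using subgroup.m_inv_closed[OF L that] .
  have L1: "\<one> \<in> L" by (rule subgroup.one_closed[OF L])
  define Z where "Z = {z \<in> L. z \<otimes> a = a \<otimes> z \<and> z \<otimes> b = b \<otimes> z}"
  have ZL: "Z \<subseteq> L" unfolding Z_def by auto
  have central: "z \<otimes> y = y \<otimes> z" if z: "z \<in> Z" and y: "y \<in> L" for z y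
  proof -
    have zc: "z \<in> carrier G" using z ZL Lc by auto
    from y show ?thesis unfolding L_def
    proof (induct rule: generate.induct)
      case one then show ?case using zc by simp
    next
      case (incl h) then show ?case using z unfolding Z_def by auto
    next
      case (inv h)
      then have hc: "h \<in> carrier G" and hz: "z \<otimes> h = h \<otimes> z" using z ac bc unfolding Z_def by auto
      then show ?case using hc zc comm_inv[OF hc zc] by simp
    next
      case (eng h1 h2)
      then have "h1 \<in> carrier G" "h2 \<in> carrier G" using Lc unfolding L_def by auto
      then show ?case using eng zc by (simp add: m_assoc[symmetric]) (simp add: m_assoc)
    qed
  qed
  have Zsub: "subgroup Z G"
  proof (rule subgroupI)
    show "Z \<subseteq> carrier G" using ZL Lc by auto
    show "Z \<noteq> {}" unfolding Z_def using ac bc L1 by (simp only: ex_in_conv[symmetric] mem_Collect_eq) (metis l_one r_one)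
  next
    fix z assume z: "z \<in> Z"
    then have zL: "z \<in> L" and zc: "z \<in> carrier G" using ZL Lc by auto
    have "inv z \<in> L" using Li[OF zL] .
    moreover have "inv z \<otimes> y = y \<otimes> inv z" if "y \<in> L" for y
    proof -
      have yc: "y \<in> carrier G" using that Lc by auto
      then show ?thesis using comm_inv[OF zc yc] central[OF z that] by simp
    qed
    ultimately show "inv z \<in> Z" unfolding Z_def using aL bL by (simp del: inv_comm)
  next
    fix z w assume z: "z \<in> Z" and w: "w \<in> Z"
    then have c: "z \<in> carrier G" "w \<in> carrier G" "z \<in> L" "w \<in> L" using ZL Lc by auto
    have "z \<otimes> w \<in> L" using Lm c(3,4) .
    moreover have "z \<otimes> w \<otimes> y = y \<otimes> (z \<otimes> w)" if "y \<in> L" for y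
    proof -
      have yc: "y \<in> carrier G" using that Lc by auto
      have "z \<otimes> w \<otimes> y = z \<otimes> (y \<otimes> w)" using central[OF w that] c yc by (simp add: m_assoc)
      also have "\<dots> = y \<otimes> (z \<otimes> w)" using central[OF z that] c yc by (simp add: m_assoc[symmetric])
      finally show ?thesis .
    qed
    ultimately show "z \<otimes> w \<in> Z" unfolding Z_def using aL bL by simp
  qed
  define cj where "cj y x = inv y \<otimes> x \<otimes> y" for y x
  define f where "f y = (cj y a, cj y b)" for y
  define Q where "Q = f ` L"
  have finQ: "finite Q"
  proof -
    have "Q \<subseteq> conj_class G a \<times> conj_class G b"
    proof
      fix p assume "p \<in> Q"
      then obtain y where y: "y \<in> L" "p = f y" unfolding Q_def by auto
      then have yc: "y \<in> carrier G" using Lc by auto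
      have "cj y x \<in> conj_class G x" if "x \<in> carrier G" for x
      proof -
        have "cj y x = inv y \<otimes> x \<otimes> inv (inv y)" unfolding cj_def using yc by simp
        then show ?thesis unfolding conj_class_def using yc by blast
      qed
      then have "cj y a \<in> conj_class G a" "cj y b \<in> conj_class G b" using ac bc by auto
      then show "p \<in> conj_class G a \<times> conj_class G b" using y unfolding f_def by auto
    qed
    moreover have "finite (conj_class G a \<times> conj_class G b)" using a b unfolding FC_def by auto
    ultimately show ?thesis using finite_subset by blast
  qed
  have Lcar: "x \<in> carrier G" if "x \<in> L" for x using Lc that by blast
  have key: "u \<otimes> inv v \<in> Z" if u: "u \<in> L" and v: "v \<in> L" and fuv: "f u = f v" for u v
  proof -
    have uc: "u \<in> carrier G" and vc: "v \<in> carrier G" using Lcar u v by auto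
    have comm: "u \<otimes> inv v \<otimes> x = x \<otimes> (u \<otimes> inv v)" if xc: "x \<in> carrier G" and e: "cj u x = cj v x" for x
    proof -
      have e1: "x \<otimes> u = u \<otimes> (inv u \<otimes> x \<otimes> u)" using uc xc by (simp add: m_assoc[symmetric] r_inv)
      also have "\<dots> = u \<otimes> (inv v \<otimes> x \<otimes> v)" using e unfolding cj_def by simp
      finally have e2: "x \<otimes> u = u \<otimes> (inv v \<otimes> x \<otimes> v)" .
      have "u \<otimes> inv v \<otimes> x = u \<otimes> (inv v \<otimes> x \<otimes> v) \<otimes> inv v" using uc vc xc by (simp add: m_assoc r_inv)
      also have "\<dots> = x \<otimes> u \<otimes> inv v" using e2 by simp
      also have "\<dots> = x \<otimes> (u \<otimes> inv v)" using uc vc xc by (simp add: m_assoc)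
      finally show ?thesis .
    qed
    have mem: "u \<otimes> inv v \<in> L" using Lm[OF u Li[OF v]] .
    have "cj u a = cj v a" "cj u b = cj v b" using fuv unfolding f_def by auto
    then have c1: "u \<otimes> inv v \<otimes> a = a \<otimes> (u \<otimes> inv v)" and c2: "u \<otimes> inv v \<otimes> b = b \<otimes> (u \<otimes> inv v)"
      using comm ac bc by auto
    show ?thesis unfolding Z_def using mem c1 c2 by simp
  qed
  define act where "act p x = (cj x (fst p), cj x (snd p))" for p x
  have f_mult: "f (y \<otimes> x) = act (f y) x" if "y \<in> carrier G" "x \<in> carrier G" for y x
    unfolding f_def act_def cj_def using that ac bc by (simp add: inv_mult_group m_assoc)
  have Qobt: "\<exists>y. y \<in> L \<and> p = f y" if "p \<in> Q" for p using that unfolding Q_def by blast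
  have actf: "act (f y) x = f (y \<otimes> x)" if "y \<in> L" "x \<in> L" for x y using f_mult Lcar that by simp
  have fQ: "f y \<in> Q" if "y \<in> L" for y unfolding Q_def using that by blast
  have actQ: "act p x \<in> Q" if pQ: "p \<in> Q" and "x \<in> L" for p x
  proof -
    obtain y where y: "y \<in> L" "p = f y" using Qobt[OF pQ] by blast
    show ?thesis unfolding y(2) actf[OF y(1) that(2)] using fQ Lm[OF y(1) that(2)] .
  qed
  have act_mult: "act (act p x) y = act p (x \<otimes> y)" if pQ: "p \<in> Q" and "x \<in> L" "y \<in> L" for p x y
  proof -
    obtain w where w: "w \<in> L" "p = f w" using Qobt[OF pQ] by blast
    have "act (act p x) y = f (w \<otimes> x \<otimes> y)" unfolding w(2) actf[OF w(1) that(2)] actf[OF Lm[OF w(1) that(2)] that(3)] ..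
    also have "\<dots> = f (w \<otimes> (x \<otimes> y))" using Lcar w that by (simp add: m_assoc)
    also have "\<dots> = act p (x \<otimes> y)" unfolding w(2) actf[OF w(1) Lm[OF that(2,3)]] ..
    finally show ?thesis .
  qed
  have act_one: "act p \<one> = p" if pQ: "p \<in> Q" for p
  proof -
    obtain w where w: "w \<in> L" "p = f w" using Qobt[OF pQ] by blast
    show ?thesis unfolding w(2) actf[OF w(1) L1] using Lcar[OF w(1)] by simp
  qed
  have act_inv: "act (act p x) (inv x) = p" if "p \<in> Q" "x \<in> L" for p x
    using act_mult[OF that Li[OF that(2)]] act_one[OF that(1)] Lcar[OF that(2)] by simp
  have act_inj: "inj_on (\<lambda>p. act p x) Q" if "x \<in> L" for x
  proof (rule inj_onI)
    fix p q assume pq: "p \<in> Q" "q \<in> Q" "act p x = act q x"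
    have "p = act (act p x) (inv x)" using act_inv[OF pq(1) that] by simp
    also have "\<dots> = act (act q x) (inv x)" using pq(3) by simp
    also have "\<dots> = q" using act_inv[OF pq(2) that] .
    finally show "p = q" .
  qed
  have act_surj: "(\<lambda>p. act p x) ` Q = Q" if "x \<in> L" for x
  proof
    show "(\<lambda>p. act p x) ` Q \<subseteq> Q" using actQ that by blast
  next
    show "Q \<subseteq> (\<lambda>p. act p x) ` Q"
    proof
      fix p assume p: "p \<in> Q"
      have "act (act p (inv x)) x = p"
        using act_mult[OF p Li[OF that] that] act_one[OF p] Lcar[OF that] by (simp add: l_inv)
      moreover have "act p (inv x) \<in> Q" using actQ[OF p Li[OF that]] .
      ultimately show "p \<in> (\<lambda>p. act p x) ` Q" by (metis image_eqI)
    qed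
  qed

  define r where "r p = (SOME y. y \<in> L \<and> f y = p)" for p
  have r: "r p \<in> L \<and> f (r p) = p" if pQ: "p \<in> Q" for p
  proof -
    obtain y where "y \<in> L" "p = f y" using Qobt[OF pQ] by blast
    then have "\<exists>y. y \<in> L \<and> f y = p" by blast
    then show ?thesis unfolding r_def by (rule someI_ex)
  qed
  have rL: "r p \<in> L" if "p \<in> Q" for p using r[OF that] by blast
  have rf: "f (r p) = p" if "p \<in> Q" for p using r[OF that] by blast
  define tr where "tr p x = r p \<otimes> x \<otimes> inv (r (act p x))" for p x
  have trZ: "tr p x \<in> Z" if "p \<in> Q" "x \<in> L" for p x
  proof -
    have m1: "r p \<otimes> x \<in> L" using Lm[OF rL[OF that(1)] that(2)] .
    have m2: "r (act p x) \<in> L" using rL[OF actQ[OF that]] .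
    have "f (r p \<otimes> x) = act p x" using actf[OF rL[OF that(1)] that(2)] rf[OF that(1)] by simp
    also have "\<dots> = f (r (act p x))" using rf[OF actQ[OF that]] by simp
    finally show ?thesis unfolding tr_def using key[OF m1 m2] by blast
  qed
  define Zg where "Zg = G\<lparr>carrier := Z\<rparr>"
  have gZ: "group Zg" unfolding Zg_def by (rule subgroup_imp_group[OF Zsub])
  have cZ: "comm_group Zg"
  proof (rule group.group_comm_groupI[OF gZ])
    fix x y assume xy: "x \<in> carrier Zg" "y \<in> carrier Zg"
    then have "x \<in> Z" "y \<in> L" using ZL unfolding Zg_def by auto
    then have "x \<otimes> y = y \<otimes> x" by (rule central)
    then show "x \<otimes>\<^bsub>Zg\<^esub> y = y \<otimes>\<^bsub>Zg\<^esub> x" unfolding Zg_def by simp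
  qed
  then have cmZ: "comm_monoid Zg" by (simp add: comm_group_def)
  have Zcar: "z \<in> carrier G" if "z \<in> Z" for z using Lcar ZL that by blast
  have ZLm: "z \<in> L" if "z \<in> Z" for z using ZL that by blast
  define V where "V x = finprod Zg (\<lambda>p. tr p x) Q" for x
  have FQ: "(\<lambda>p. tr p x) \<in> Q \<rightarrow> carrier Zg" if "x \<in> L" for x
    using trZ that unfolding Zg_def by simp
  have VZ: "V x \<in> Z" if "x \<in> L" for x
  proof -
    have "V x \<in> carrier Zg" unfolding V_def by (rule comm_monoid.finprod_closed[OF cmZ FQ[OF that]])
    then show ?thesis unfolding Zg_def by simp
  qed
  have Vmult: "V (x \<otimes> y) = V x \<otimes> V y" if x: "x \<in> L" and y: "y \<in> L" for x y
  proof -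
    have xc: "x \<in> carrier G" and yc: "y \<in> carrier G" using Lcar x y by auto
    have split: "tr p (x \<otimes> y) = tr p x \<otimes> tr (act p x) y" if p: "p \<in> Q" for p
    proof -
      have ap: "act p x \<in> Q" using actQ[OF p x] .
      have aap: "act (act p x) y \<in> Q" using actQ[OF ap y] .
      have c1: "r p \<in> carrier G" "r (act p x) \<in> carrier G" "r (act (act p x) y) \<in> carrier G"
        using Lcar rL p ap aap by auto
      have "tr p x \<otimes> tr (act p x) y = r p \<otimes> x \<otimes> inv (r (act p x)) \<otimes> (r (act p x) \<otimes> (y \<otimes> inv (r (act (act p x) y))))"
        unfolding tr_def using c1 xc yc by (simp add: m_assoc)
      also have "\<dots> = r p \<otimes> x \<otimes> (y \<otimes> inv (r (act (act p x) y)))"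
        using c1 xc yc by (intro cancel_mid) auto
      also have "\<dots> = tr p (x \<otimes> y)" unfolding tr_def using c1 xc yc
        by (simp add: m_assoc act_mult[OF p x y])
      finally show ?thesis by simp
    qed
    have F1: "(\<lambda>p. tr p x) \<in> Q \<rightarrow> carrier Zg" using FQ[OF x] .
    have F2: "(\<lambda>p. tr (act p x) y) \<in> Q \<rightarrow> carrier Zg" using trZ[OF actQ[OF _ x] y] unfolding Zg_def by simp
    have F3: "(\<lambda>q. tr q y) \<in> (\<lambda>p. act p x) ` Q \<rightarrow> carrier Zg" using FQ[OF y] act_surj[OF x] by simp
    have "V (x \<otimes> y) = finprod Zg (\<lambda>p. tr p x \<otimes>\<^bsub>Zg\<^esub> tr (act p x) y) Q"
      unfolding V_def
    proof (rule comm_monoid.finprod_cong'[OF cmZ])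
      show "Q = Q" ..
      show "(\<lambda>p. tr p x \<otimes>\<^bsub>Zg\<^esub> tr (act p x) y) \<in> Q \<rightarrow> carrier Zg"
        using F1 F2 gZ by (auto intro: group.is_monoid monoid.m_closed)
      fix p assume "p \<in> Q"
      then show "tr p (x \<otimes> y) = tr p x \<otimes>\<^bsub>Zg\<^esub> tr (act p x) y" using split unfolding Zg_def by simp
    qed
    also have "\<dots> = V x \<otimes>\<^bsub>Zg\<^esub> finprod Zg (\<lambda>p. tr (act p x) y) Q"
      unfolding V_def using comm_monoid.finprod_multf[OF cmZ F1 F2] .
    also have "finprod Zg (\<lambda>p. tr (act p x) y) Q = finprod Zg (\<lambda>q. tr q y) ((\<lambda>p. act p x) ` Q)"
      using comm_monoid.finprod_reindex[OF cmZ F3 act_inj[OF x]] by simp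
    also have "\<dots> = V y" unfolding V_def using act_surj[OF x] by simp
    finally show ?thesis unfolding Zg_def by simp
  qed
  have Vcentral: "V z = z [^] card Q" if z: "z \<in> Z" for z
  proof -
    have zL: "z \<in> L" and zc: "z \<in> carrier G" using z ZLm Zcar by auto
    have trz: "tr p z = z" if p: "p \<in> Q" for p
    proof -
      obtain w where w: "w \<in> L" "p = f w" using Qobt[OF p] by blast
      have wc: "w \<in> carrier G" using Lcar w by auto
      have cjL: "cj w u \<in> L" if "u \<in> L" for u
        unfolding cj_def using Lm[OF Lm[OF Li[OF w(1)] that] w(1)] .
      have fix1: "cj z (cj w u) = cj w u" if "u \<in> L" for u
        unfolding cj_def[of z] using conj_comm_id[OF zc Lcar[OF cjL[OF that]] central[OF z cjL[OF that]]] .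
      have "act p z = p" unfolding w(2) act_def f_def using fix1 aL bL by simp
      then have "tr p z = r p \<otimes> z \<otimes> inv (r p)" unfolding tr_def by simp
      also have "\<dots> = z \<otimes> r p \<otimes> inv (r p)" using central[OF z rL[OF p]] by simp
      also have "\<dots> = z" using zc Lcar[OF rL[OF p]] by (simp add: m_assoc r_inv)
      finally show ?thesis .
    qed
    have "V z = finprod Zg (\<lambda>p. z) Q" unfolding V_def
    proof (rule comm_monoid.finprod_cong'[OF cmZ])
      show "Q = Q" ..
      show "(\<lambda>p. z) \<in> Q \<rightarrow> carrier Zg" using z unfolding Zg_def by simp
      fix p assume "p \<in> Q" then show "tr p z = z" by (rule trz)
    qed
    also have "\<dots> = z [^]\<^bsub>Zg\<^esub> card Q"
      by (rule comm_monoid.finprod_const[OF cmZ]) (simp add: Zg_def z)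
    also have "\<dots> = z [^] card Q" unfolding Zg_def by (rule nat_pow_consistent[symmetric])
    finally show ?thesis .
  qed
  have oneZ: "\<one> \<in> Z" by (rule subgroup.one_closed[OF Zsub])
  have V1: "V \<one> = \<one>" using Vcentral[OF oneZ] by simp
  have Vinv: "V (inv x) \<otimes> V x = \<one>" if "x \<in> L" for x
  proof -
    have "V (inv x) \<otimes> V x = V (inv x \<otimes> x)" using Vmult[OF Li[OF that] that] by simp
    also have "inv x \<otimes> x = \<one>" using Lcar[OF that] by (simp add: l_inv)
    finally show ?thesis using V1 by simp
  qed
  define c where "c = grp_commutator G a b"
  have iaL: "inv a \<in> L" and ibL: "inv b \<in> L" using Li aL bL by auto
  have cL: "c \<in> L" unfolding c_def grp_commutator_def using Lm[OF Lm[OF Lm[OF iaL ibL] aL] bL] .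
  have Vc: "V c = \<one>"
  proof -
    define p1 where "p1 = V (inv a)"
    define p2 where "p2 = V (inv b)"
    define p3 where "p3 = V a"
    define p4 where "p4 = V b"
    have pc: "p1 \<in> carrier G" "p2 \<in> carrier G" "p3 \<in> carrier G" "p4 \<in> carrier G"
      unfolding p1_def p2_def p3_def p4_def using Zcar VZ iaL ibL aL bL by auto
    have "V c = p1 \<otimes> p2 \<otimes> p3 \<otimes> p4" unfolding c_def grp_commutator_def p1_def p2_def p3_def p4_def
      using Vmult[OF Lm[OF Lm[OF iaL ibL] aL] bL] Vmult[OF Lm[OF iaL ibL] aL] Vmult[OF iaL ibL] by simp
    also have "\<dots> = p1 \<otimes> (p2 \<otimes> p3) \<otimes> p4" using pc by (simp add: m_assoc)
    also have "p2 \<otimes> p3 = p3 \<otimes> p2" unfolding p2_def p3_def using central[OF VZ[OF ibL] ZLm[OF VZ[OF aL]]] .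
    also have "p1 \<otimes> (p3 \<otimes> p2) \<otimes> p4 = (p1 \<otimes> p3) \<otimes> (p2 \<otimes> p4)" using pc by (simp add: m_assoc)
    also have "\<dots> = \<one>" unfolding p1_def p2_def p3_def p4_def using Vinv[OF aL] Vinv[OF bL] by simp
    finally show ?thesis .
  qed
  have cpowL: "c [^] m \<in> L" for m :: nat
  proof (induct m)
    case 0 then show ?case using L1 by simp
  next
    case (Suc m) then show ?case using Lm[OF Suc cL] by simp
  qed
  have Vpow: "V (c [^] m) = \<one>" for m :: nat
  proof (induct m)
    case 0 then show ?case using V1 by simp
  next
    case (Suc m) then show ?case using Vmult[OF cpowL cL] Vc by simp
  qed
  have "\<not> inj (\<lambda>i::nat. f (c [^] i))"
  proof
    assume inj: "inj (\<lambda>i::nat. f (c [^] i))"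
    have "range (\<lambda>i::nat. f (c [^] i)) \<subseteq> Q" using fQ[OF cpowL] by blast
    then have "finite (range (\<lambda>i::nat. f (c [^] i)))" using finQ finite_subset by blast
    then have "finite (UNIV :: nat set)" using finite_imageD[OF _ inj] by blast
    then show False by simp
  qed
  then obtain i j :: nat where ij0: "i \<noteq> j" "f (c [^] i) = f (c [^] j)"
    unfolding inj_def by blast
  then obtain i j :: nat where ij: "i < j" "f (c [^] i) = f (c [^] j)"
    by (metis linorder_neqE_nat)
  have ccar: "c \<in> carrier G" using Lcar[OF cL] .
  have "c [^] j \<otimes> inv (c [^] i) \<in> Z" using key[OF cpowL cpowL ij(2)[symmetric]] .
  moreover have "c [^] j = c [^] (j - i) \<otimes> c [^] i" using ij ccar by (simp add: nat_pow_mult)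
  moreover have "c [^] (j - i) \<otimes> c [^] i \<otimes> inv (c [^] i) = c [^] (j - i)" using ccar by (simp add: m_assoc r_inv)
  ultimately have uZ: "c [^] (j - i) \<in> Z" by simp
  have "(c [^] (j - i)) [^] card Q = \<one>" using Vcentral[OF uZ] Vpow by simp
  then have "c [^] ((j - i) * card Q) = \<one>" using ccar by (simp add: nat_pow_pow)
  moreover have "card Q > 0" using finQ fQ[OF L1] by (auto simp: card_gt_0_iff)
  ultimately show ?thesis unfolding c_def using ij by (intro exI[of _ "(j - i) * card Q"]) simp
qed
end

context group begin
lemma inv_cancel_l: "x \<in> carrier G \<Longrightarrow> y \<in> carrier G \<Longrightarrow> inv x \<otimes> (x \<otimes> y) = y"
  using inv_solve_left'[of y x "x \<otimes> y"] by simp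
lemma inv_cancel_l2: "x \<in> carrier G \<Longrightarrow> y \<in> carrier G \<Longrightarrow> x \<otimes> (inv x \<otimes> y) = y"
  using inv_cancel_l[of "inv x" y] by simp

lemma conj_conj: "h2 \<in> carrier G \<Longrightarrow> h \<in> carrier G \<Longrightarrow> s \<in> carrier G \<Longrightarrow>
  h2 \<otimes> (h \<otimes> s \<otimes> inv h) \<otimes> inv h2 = (h2 \<otimes> h) \<otimes> s \<otimes> inv (h2 \<otimes> h)"
  by (simp add: m_assoc inv_mult_group)

lemma comm_conj_split: "h \<in> carrier G \<Longrightarrow> x \<in> carrier G \<Longrightarrow> g \<in> carrier G \<Longrightarrow>
  h \<otimes> (inv x \<otimes> inv g \<otimes> x \<otimes> g) \<otimes> inv h =
  ((h \<otimes> inv x) \<otimes> inv g \<otimes> inv (h \<otimes> inv x)) \<otimes> (h \<otimes> g \<otimes> inv h)"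
  by (simp add: m_assoc inv_mult_group inv_cancel_l)
end

lemma cont_mult:
  assumes tg: "topological_group G T" and F: "continuous_map T T F" and H: "continuous_map T T H"
  shows "continuous_map T T (\<lambda>x. F x \<otimes>\<^bsub>G\<^esub> H x)"
proof -
  have m: "continuous_map (prod_topology T T) T (\<lambda>(x, y). x \<otimes>\<^bsub>G\<^esub> y)"
    using tg unfolding topological_group_def by blast
  have "continuous_map T T ((\<lambda>(x, y). x \<otimes>\<^bsub>G\<^esub> y) \<circ> (\<lambda>x. (F x, H x)))"
    by (rule continuous_map_compose[OF continuous_map_pairedI[OF F H] m])
  then show ?thesis by (simp add: o_def)
qed

lemma cont_inv:
  assumes tg: "topological_group G T" and F: "continuous_map T T F"
  shows "continuous_map T T (\<lambda>x. inv\<^bsub>G\<^esub> (F x))"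
proof -
  have m: "continuous_map T T (\<lambda>x. inv\<^bsub>G\<^esub> x)"
    using tg unfolding topological_group_def by blast
  have "continuous_map T T ((\<lambda>x. inv\<^bsub>G\<^esub> x) \<circ> F)"
    by (rule continuous_map_compose[OF F m])
  then show ?thesis by (simp add: o_def)
qed

lemma finite_gen_bound:
  assumes grp: "group G" and t1: "t1_space T" and top: "topspace T = carrier G"
    and W: "W \<subseteq> carrier G" and cc: "\<And>h x. h \<in> carrier G \<Longrightarrow> x \<in> W \<Longrightarrow> h \<otimes>\<^bsub>G\<^esub> x \<otimes>\<^bsub>G\<^esub> inv\<^bsub>G\<^esub> h \<in> W"
    and fin: "finite W" and tor: "\<And>t. t \<in> W \<Longrightarrow> \<exists>n::nat. n > 0 \<and> t [^]\<^bsub>G\<^esub> n = \<one>\<^bsub>G\<^esub>"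
    and Y: "Y \<subseteq> W"
  shows "finite (top_generate G T Y)"
proof -
  define H where "H = generate G W"
  have fH: "finite H" unfolding H_def by (rule group.dietzmann[OF grp W cc fin tor])
  have sH: "subgroup H G" unfolding H_def by (rule group.generate_is_subgroup[OF grp W])
  have "H \<subseteq> topspace T" using subgroup.subset[OF sH] top by simp
  then have cH: "closedin T H" using t1 fH unfolding t1_space_closedin_finite by blast
  have "Y \<subseteq> H" using Y unfolding H_def by (auto intro: generate.incl)
  then have "top_generate G T Y \<subseteq> H" unfolding top_generate_def using sH cH by (intro Inter_lower) simp
  then show ?thesis using fH finite_subset by blast
qed

lemma (in group) part1_lem:
  assumes tg: "topological_group G T" and t1: "t1_space T" and dense: "T closure_of (FC G) = topspace T"
    and g: "g \<in> FC G"
  shows "finite (top_commutator G T (carrier G) {g})"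
proof -
  have grp: "group G" by (rule is_group)
  have top: "topspace T = carrier G" using tg unfolding topological_group_def by auto
  have gc: "g \<in> carrier G" using g unfolding FC_def by auto
  define phi where "phi x = grp_commutator G x g" for x
  define S where "S = phi ` carrier G"
  have phic: "phi x \<in> carrier G" if "x \<in> carrier G" for x
    unfolding phi_def grp_commutator_def using that gc by simp
  have finS: "finite S"
  proof -
    have "S \<subseteq> (\<lambda>u. u \<otimes> g) ` conj_class G (inv g)"
    proof
      fix s assume "s \<in> S"
      then obtain x where x: "x \<in> carrier G" "s = phi x" unfolding S_def by blast
      have "inv x \<otimes> inv g \<otimes> inv (inv x) \<in> conj_class G (inv g)"
        unfolding conj_class_def using x by blast
      moreover have "s = (inv x \<otimes> inv g \<otimes> inv (inv x)) \<otimes> g"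
        using x gc unfolding phi_def grp_commutator_def by simp
      ultimately show "s \<in> (\<lambda>u. u \<otimes> g) ` conj_class G (inv g)" by blast
    qed
    moreover have "finite (conj_class G (inv g))"
      using conj_class_finite_inv g gc unfolding FC_def by blast
    ultimately show ?thesis using finite_subset by blast
  qed
  have cphi: "continuous_map T T phi"
  proof -
    have cid: "continuous_map T T (\<lambda>x. x)" by (rule continuous_map_id[unfolded id_def])
    have cg: "continuous_map T T (\<lambda>x. g)" using gc top by simp
    have cig: "continuous_map T T (\<lambda>x. inv g)" using gc top by simp
    have "continuous_map T T (\<lambda>x. inv x \<otimes> inv g \<otimes> x \<otimes> g)"
      by (intro cont_mult[OF tg] cont_inv[OF tg] cid cg cig)
    then show ?thesis unfolding phi_def grp_commutator_def .
  qed
  have tor_phi: "\<exists>n::nat. n > 0 \<and> phi x [^] n = \<one>" if x: "x \<in> carrier G" for x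
  proof -
    define U where "U = topspace T - {y \<in> topspace T. phi y \<in> S - {phi x}}"
    have "S - {phi x} \<subseteq> topspace T" using top phic unfolding S_def by auto
    then have "closedin T (S - {phi x})" using t1 finS unfolding t1_space_closedin_finite by blast
    then have "closedin T {y \<in> topspace T. phi y \<in> S - {phi x}}"
      by (rule closedin_continuous_map_preimage[OF cphi])
    then have oU: "openin T U" unfolding U_def by (intro openin_diff) auto
    have xU: "x \<in> U" unfolding U_def using x top by auto
    have "x \<in> T closure_of (FC G)" using dense x top by simp
    then obtain y where y: "y \<in> FC G" "y \<in> U" using oU xU unfolding in_closure_of by blast
    have yc: "y \<in> carrier G" using y unfolding FC_def by auto
    have "phi y \<in> S" unfolding S_def using yc by blast
    then have "phi y = phi x" using y(2) yc top unfolding U_def by blast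
    then show ?thesis using comm_torsion[OF y(1) g] unfolding phi_def by simp
  qed
  define W where "W = {h \<otimes> s \<otimes> inv h | h s. h \<in> carrier G \<and> s \<in> S}"
  have SC: "S \<subseteq> carrier G" unfolding S_def using phic by blast
  have WC: "W \<subseteq> carrier G" unfolding W_def using SC by blast
  have ccW: "h \<otimes> w \<otimes> inv h \<in> W" if hc: "h \<in> carrier G" and wW: "w \<in> W" for h w
  proof -
    obtain h1 s where hs: "h1 \<in> carrier G" "s \<in> S" "w = h1 \<otimes> s \<otimes> inv h1" using wW unfolding W_def by blast
    have "h \<otimes> w \<otimes> inv h = (h \<otimes> h1) \<otimes> s \<otimes> inv (h \<otimes> h1)"
      unfolding hs(3) using conj_conj[OF hc hs(1)] hs SC by blast
    then show ?thesis unfolding W_def using hs hc by blast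
  qed
  have torW: "\<exists>n::nat. n > 0 \<and> w [^] n = \<one>" if wW: "w \<in> W" for w
  proof -
    obtain h s where hs: "h \<in> carrier G" "s \<in> S" "w = h \<otimes> s \<otimes> inv h" using wW unfolding W_def by blast
    obtain x where x: "x \<in> carrier G" "s = phi x" using hs(2) unfolding S_def by blast
    obtain n :: nat where n: "n > 0" "s [^] n = \<one>" using tor_phi[OF x(1)] x(2) by blast
    have "w [^] n = h \<otimes> s [^] n \<otimes> inv h" unfolding hs(3) using conj_pow hs SC by blast
    also have "\<dots> = \<one>" using n hs by simp
    finally show ?thesis using n by blast
  qed
  have finW: "finite W"
  proof -
    have "W \<subseteq> (\<lambda>(u, k). u \<otimes> k) ` (conj_class G (inv g) \<times> conj_class G g)"
    proof
      fix w assume "w \<in> W"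
      then obtain h s where hs: "h \<in> carrier G" "s \<in> S" "w = h \<otimes> s \<otimes> inv h" unfolding W_def by blast
      obtain x where x: "x \<in> carrier G" "s = phi x" using hs(2) unfolding S_def by blast
      have e: "w = ((h \<otimes> inv x) \<otimes> inv g \<otimes> inv (h \<otimes> inv x)) \<otimes> (h \<otimes> g \<otimes> inv h)"
        unfolding hs(3) x(2) phi_def grp_commutator_def using comm_conj_split[OF hs(1) x(1) gc] .
      have "(h \<otimes> inv x) \<otimes> inv g \<otimes> inv (h \<otimes> inv x) \<in> conj_class G (inv g)"
        unfolding conj_class_def using hs(1) x(1) by blast
      moreover have "h \<otimes> g \<otimes> inv h \<in> conj_class G g" unfolding conj_class_def using hs(1) by blast
      ultimately show "w \<in> (\<lambda>(u, k). u \<otimes> k) ` (conj_class G (inv g) \<times> conj_class G g)"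
        using e by force
    qed
    moreover have "finite (conj_class G (inv g) \<times> conj_class G g)"
      using conj_class_finite_inv g gc unfolding FC_def by blast
    ultimately show ?thesis using finite_subset by blast
  qed
  have SW: "S \<subseteq> W"
  proof
    fix s assume s: "s \<in> S"
    then have "s = \<one> \<otimes> s \<otimes> inv \<one>" using SC by auto
    then show "s \<in> W" unfolding W_def using s by blast
  qed
  have eqS: "{grp_commutator G x y |x y. x \<in> carrier G \<and> y \<in> {g}} = S"
    unfolding S_def phi_def by blast
  show ?thesis unfolding top_commutator_def eqS
    by (rule finite_gen_bound[OF grp t1 top WC ccW finW torW SW])
qed

lemma (in group) part2_lem:
  assumes t1: "t1_space T" and top: "topspace T = carrier G"
    and g: "g \<in> FC G" and n: "\<exists>n::nat. n > 0 \<and> g [^] n = \<one>"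
  shows "finite (top_generate G T (conj_class G g))"
proof -
  have grp: "group G" by (rule is_group)
  have gc: "g \<in> carrier G" using g unfolding FC_def by auto
  have WC: "conj_class G g \<subseteq> carrier G" unfolding conj_class_def using gc by auto
  have ccW: "h \<otimes> w \<otimes> inv h \<in> conj_class G g" if hc: "h \<in> carrier G" and wc: "w \<in> conj_class G g" for h w
  proof -
    obtain h1 where hs: "h1 \<in> carrier G" "w = h1 \<otimes> g \<otimes> inv h1" using wc unfolding conj_class_def by blast
    have "h \<otimes> w \<otimes> inv h = (h \<otimes> h1) \<otimes> g \<otimes> inv (h \<otimes> h1)"
      unfolding hs(2) using conj_conj[OF hc hs(1) gc] .
    then show ?thesis unfolding conj_class_def using hs hc by blast
  qed
  obtain k :: nat where k: "k > 0" "g [^] k = \<one>" using n by blast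
  have torW: "\<exists>n::nat. n > 0 \<and> w [^] n = \<one>" if wW: "w \<in> conj_class G g" for w
  proof -
    obtain h where hs: "h \<in> carrier G" "w = h \<otimes> g \<otimes> inv h" using wW unfolding conj_class_def by blast
    have "w [^] k = h \<otimes> g [^] k \<otimes> inv h" unfolding hs(2) using conj_pow hs gc by blast
    also have "\<dots> = \<one>" using k hs by simp
    finally show ?thesis using k by blast
  qed
  have finW: "finite (conj_class G g)" using g unfolding FC_def by auto
  show ?thesis by (rule finite_gen_bound[OF grp t1 top WC ccW finW torW subset_refl])
qed

theorem lemma2p2:
  fixes G :: "('a, 'b) monoid_scheme" and T :: "'a topology"
  assumes "profinite_group G T"
    and "T closure_of (FC G) = topspace T"
  shows "(\<forall>g \<in> FC G. finite (top_commutator G T (carrier G) {g}))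
       \<and> (\<forall>g \<in> FC G. (\<exists>n::nat. n > 0 \<and> g [^]\<^bsub>G\<^esub> n = \<one>\<^bsub>G\<^esub>)
              \<longrightarrow> finite (top_generate G T (conj_class G g)))"
proof -
  have tg: "topological_group G T" using assms(1) unfolding profinite_group_def by blast
  have grp: "group G" and top: "topspace T = carrier G" using tg unfolding topological_group_def by auto
  have t1: "t1_space T" using assms(1) Hausdorff_imp_t1_space unfolding profinite_group_def by blast
  show ?thesis
    using group.part1_lem[OF grp tg t1 assms(2)] group.part2_lem[OF grp t1 top] by blast
qed

end
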